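(* Let $R$ be an associative ring with identity and $a,b\in R$. If $ab\in R^{\dagger}$, then $ba\in R^{\dagger}$ and $(ba)^{\dagger}=b\big((ab)^{\dagger}\big)^2a$.
   Context: For $x\in R$, $\mathrm{comm}(x)=\{y\in R : xy=yx\}$ and $\mathrm{comm}^2(x)=\{y\in R : yz=zy \text{ for all } z\in\mathrm{comm}(x)\}$. $R^{rad}$ is the Jacobson radical of $R$. An element $x$ has a p-Drazin (pseudo Drazin) inverse if there is $y\in R$ with $y=yxy$, $y\in\mathrm{comm}^2(x)$ and $x^k-x^{k+1}y\in R^{rad}$ for some $k\in\mathbb{N}$; such $y$ is unique and denoted $x^{\dagger}$; $R^{\dagger}$ is the set of such $x$. *)

theory Defs
  imports Main
begin

definition left_ideal :: "'a::ring_1 set \<Rightarrow> bool" where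
  "left_ideal I \<longleftrightarrow> 0 \<in> I \<and> (\<forall>x\<in>I. \<forall>y\<in>I. x + y \<in> I) \<and>
     (\<forall>x\<in>I. - x \<in> I) \<and> (\<forall>r. \<forall>x\<in>I. r * x \<in> I)"

definition maximal_left_ideal :: "'a::ring_1 set \<Rightarrow> bool" where
  "maximal_left_ideal I \<longleftrightarrow> left_ideal I \<and> I \<noteq> UNIV \<and>
     (\<forall>J. left_ideal J \<and> I \<subseteq> J \<longrightarrow> J = I \<or> J = UNIV)"

definition jacobson_radical :: "'a::ring_1 set" where
  "jacobson_radical = \<Inter> {I. maximal_left_ideal I}"

definition comm :: "'a::ring_1 \<Rightarrow> 'a set" where
  "comm x = {y. x * y = y * x}"

definition comm2 :: "'a::ring_1 \<Rightarrow> 'a set" where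
  "comm2 x = {y. \<forall>z\<in>comm x. y * z = z * y}"

definition is_pdrazin_inv :: "'a::ring_1 \<Rightarrow> 'a \<Rightarrow> bool" where
  "is_pdrazin_inv x y \<longleftrightarrow> y = y * x * y \<and> y \<in> comm2 x \<and>
     (\<exists>k::nat. x ^ k - x ^ (k + 1) * y \<in> jacobson_radical)"

definition pdrazin_set :: "'a::ring_1 set" where
  "pdrazin_set = {x. \<exists>y. is_pdrazin_inv x y}"

definition pdrazin :: "'a::ring_1 \<Rightarrow> 'a" where
  "pdrazin x = (THE y. is_pdrazin_inv x y)"

end

theory Submission
  imports Defs
begin

lemma J_mem: "x \<in> jacobson_radical \<longleftrightarrow> (\<forall>M. maximal_left_ideal M \<longrightarrow> x \<in> (M::'a::ring_1 set))"
  unfolding jacobson_radical_def by blast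

lemma max_li: "maximal_left_ideal M \<Longrightarrow> left_ideal M"
  unfolding maximal_left_ideal_def by simp

lemma J_left: "x \<in> jacobson_radical \<Longrightarrow> r * x \<in> (jacobson_radical::'a::ring_1 set)"
  unfolding J_mem using max_li unfolding left_ideal_def by metis

lemma J_add: "x \<in> jacobson_radical \<Longrightarrow> y \<in> jacobson_radical \<Longrightarrow> x + y \<in> (jacobson_radical::'a::ring_1 set)"
  unfolding J_mem using max_li unfolding left_ideal_def by metis

lemma J_neg: "x \<in> jacobson_radical \<Longrightarrow> - x \<in> (jacobson_radical::'a::ring_1 set)"
  unfolding J_mem using max_li unfolding left_ideal_def by metis

lemma J_diff: "x \<in> jacobson_radical \<Longrightarrow> y \<in> jacobson_radical \<Longrightarrow> x - y \<in> (jacobson_radical::'a::ring_1 set)"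
  using J_add[of x "-y"] J_neg[of y] by simp

lemma span_ideal:
  fixes M :: "'a::ring_1 set"
  assumes "left_ideal M"
  shows "left_ideal {m + r * w | m r. m \<in> M}"
proof -
  have z: "0 \<in> M" and ad: "\<And>x y. x \<in> M \<Longrightarrow> y \<in> M \<Longrightarrow> x + y \<in> M"
    and ng: "\<And>x. x \<in> M \<Longrightarrow> - x \<in> M" and lm: "\<And>r x. x \<in> M \<Longrightarrow> r * x \<in> M"
    using assms unfolding left_ideal_def by auto
  show ?thesis unfolding left_ideal_def
  proof (intro conjI ballI allI)
    show "0 \<in> {m + r * w | m r. m \<in> M}" using z by (intro CollectI exI[of _ 0]) simp
  next
    fix x y assume "x \<in> {m + r * w | m r. m \<in> M}" "y \<in> {m + r * w | m r. m \<in> M}"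
    then obtain m1 r1 m2 r2 where "x = m1 + r1 * w" "m1 \<in> M" "y = m2 + r2 * w" "m2 \<in> M" by blast
    then show "x + y \<in> {m + r * w | m r. m \<in> M}"
      by (intro CollectI exI[of _ "m1 + m2"] exI[of _ "r1 + r2"]) (auto simp: ad algebra_simps)
  next
    fix x assume "x \<in> {m + r * w | m r. m \<in> M}"
    then obtain m1 r1 where "x = m1 + r1 * w" "m1 \<in> M" by blast
    then show "- x \<in> {m + r * w | m r. m \<in> M}"
      by (intro CollectI exI[of _ "- m1"] exI[of _ "- r1"]) (auto simp: ng algebra_simps)
  next
    fix r x assume "x \<in> {m + r * w | m r. m \<in> M}"
    then obtain m1 r1 where "x = m1 + r1 * w" "m1 \<in> M" by blast
    then show "r * x \<in> {m + r * w | m r. m \<in> M}"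
      by (intro CollectI exI[of _ "r * m1"] exI[of _ "r * r1"]) (auto simp: lm algebra_simps)
  qed
qed

lemma J_right:
  fixes x s :: "'a::ring_1"
  assumes x: "x \<in> jacobson_radical"
  shows "x * s \<in> jacobson_radical"
  unfolding jacobson_radical_def
proof
  fix M :: "'a set" assume "M \<in> {I. maximal_left_ideal I}"
  hence MM: "maximal_left_ideal M" by simp
  hence LM: "left_ideal M" and pM: "M \<noteq> UNIV"
    and mx: "\<And>J. left_ideal J \<Longrightarrow> M \<subseteq> J \<Longrightarrow> J = M \<or> J = UNIV"
    unfolding maximal_left_ideal_def by auto
  have z: "0 \<in> M" and ad: "\<And>x y. x \<in> M \<Longrightarrow> y \<in> M \<Longrightarrow> x + y \<in> M"
    and ng: "\<And>x. x \<in> M \<Longrightarrow> - x \<in> M" and lm: "\<And>r x. x \<in> M \<Longrightarrow> r * x \<in> M"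
    using LM unfolding left_ideal_def by auto
  show "x * s \<in> M"
  proof (cases "s \<in> M")
    case True then show ?thesis by (rule lm)
  next
    case sM: False
    define K where "K = {t. t * s \<in> M}"
    have LK: "left_ideal K" unfolding left_ideal_def K_def
      using z ad ng lm by (auto simp: algebra_simps)
    have pK: "K \<noteq> UNIV"
    proof
      assume "K = UNIV" hence "1 \<in> K" by simp
      thus False using sM unfolding K_def by simp
    qed
    have mK: "maximal_left_ideal K" unfolding maximal_left_ideal_def
    proof (intro conjI LK pK allI impI)
      fix J assume J: "left_ideal J \<and> K \<subseteq> J"
      have Jad: "\<And>x y. x \<in> J \<Longrightarrow> y \<in> J \<Longrightarrow> x + y \<in> J"
        and Jlm: "\<And>r x. x \<in> J \<Longrightarrow> r * x \<in> J"
        using J unfolding left_ideal_def by auto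
      show "J = K \<or> J = UNIV"
      proof (cases "J \<subseteq> K")
        case True then show ?thesis using J by blast
      next
        case False
        then obtain t where tJ: "t \<in> J" and tK: "t \<notin> K" by blast
        hence tsM: "t * s \<notin> M" unfolding K_def by simp
        let ?N = "{m + r * (t * s) | m r. m \<in> M}"
        have LN: "left_ideal ?N" using span_ideal[OF LM] .
        have "M \<subseteq> ?N"
        proof
          fix x assume "x \<in> M"
          hence "x = x + 0 * (t * s) \<and> x \<in> M" by simp
          thus "x \<in> ?N" by blast
        qed
        moreover have "t * s \<in> ?N"
        proof -
          have "t * s = 0 + 1 * (t * s) \<and> (0::'a) \<in> M" using z by simp
          thus ?thesis by blast
        qed
        ultimately have "?N \<noteq> M" "M \<subseteq> ?N" using tsM by auto
        hence "?N = UNIV" using mx[OF LN] by blast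
        have "u \<in> J" for u
        proof -
          have "u * s \<in> ?N" using \<open>?N = UNIV\<close> by simp
          then obtain m r where m: "m \<in> M" and us: "u * s = m + r * (t * s)" by blast
          have "(u - r * t) * s = m" using us by (simp add: algebra_simps)
          hence "u - r * t \<in> K" using m unfolding K_def by simp
          hence "u - r * t \<in> J" using J by blast
          moreover have "r * t \<in> J" using Jlm[OF tJ] .
          ultimately have "(u - r * t) + r * t \<in> J" by (rule Jad)
          thus ?thesis by simp
        qed
        thus ?thesis by blast
      qed
    qed
    hence "x \<in> K" using x unfolding jacobson_radical_def by blast
    thus ?thesis unfolding K_def by simp
  qed
qed

lemma max_exists:
  fixes L :: "'a::ring_1 set"
  assumes LL: "left_ideal L" and nL: "1 \<notin> L"
  shows "\<exists>M. maximal_left_ideal M \<and> L \<subseteq> M"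
proof -
  let ?A = "{I. left_ideal I \<and> L \<subseteq> I \<and> 1 \<notin> I}"
  have "\<exists>M\<in>?A. \<forall>X\<in>?A. M \<subseteq> X \<longrightarrow> X = M"
  proof (rule subset_Zorn_nonempty)
    show "?A \<noteq> {}" using LL nL by blast
  next
    fix C assume Cne: "C \<noteq> {}" and ch: "subset.chain ?A C"
    hence CA: "C \<subseteq> ?A" and cmp: "\<And>X Y. X \<in> C \<Longrightarrow> Y \<in> C \<Longrightarrow> X \<subseteq> Y \<or> Y \<subseteq> X"
      unfolding subset_chain_def by auto
    have li: "\<And>X. X \<in> C \<Longrightarrow> left_ideal X" using CA by auto
    have "left_ideal (\<Union>C)" unfolding left_ideal_def
    proof (intro conjI ballI allI)
      obtain X where "X \<in> C" using Cne by blast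
      hence "0 \<in> X" using li[of X] unfolding left_ideal_def by simp
      thus "0 \<in> \<Union>C" using \<open>X \<in> C\<close> by blast
    next
      fix x y assume "x \<in> \<Union>C" "y \<in> \<Union>C"
      then obtain X Y where XY: "X \<in> C" "Y \<in> C" "x \<in> X" "y \<in> Y" by blast
      show "x + y \<in> \<Union>C"
      proof (cases "X \<subseteq> Y")
        case True
        hence "x + y \<in> Y" using XY li[of Y] unfolding left_ideal_def by blast
        thus ?thesis using XY by blast
      next
        case False
        hence "Y \<subseteq> X" using cmp[OF XY(1,2)] by blast
        hence "x + y \<in> X" using XY li[of X] unfolding left_ideal_def by blast
        thus ?thesis using XY by blast
      qed
    next
      fix x assume "x \<in> \<Union>C"
      then obtain X where X: "X \<in> C" "x \<in> X" by blast
      hence "- x \<in> X" using li[of X] unfolding left_ideal_def by blast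
      thus "- x \<in> \<Union>C" using X by blast
    next
      fix r x assume "x \<in> \<Union>C"
      then obtain X where X: "X \<in> C" "x \<in> X" by blast
      hence "r * x \<in> X" using li[of X] unfolding left_ideal_def by blast
      thus "r * x \<in> \<Union>C" using X by blast
    qed
    moreover have "L \<subseteq> \<Union>C" using Cne CA by blast
    moreover have "1 \<notin> \<Union>C" using CA by blast
    ultimately show "\<Union>C \<in> ?A" by blast
  qed
  then obtain M where MA: "M \<in> ?A" and Mm: "\<forall>X\<in>?A. M \<subseteq> X \<longrightarrow> X = M" by blast
  have "maximal_left_ideal M" unfolding maximal_left_ideal_def
  proof (intro conjI allI impI)
    show "left_ideal M" using MA by simp
    show "M \<noteq> UNIV" using MA by auto
  next
    fix J assume J: "left_ideal J \<and> M \<subseteq> J"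
    show "J = M \<or> J = UNIV"
    proof (cases "1 \<in> J")
      case True
      have "r \<in> J" for r
      proof -
        have "r * 1 \<in> J" using J True unfolding left_ideal_def by blast
        thus ?thesis by simp
      qed
      then show ?thesis by blast
    next
      case False
      then show ?thesis using J MA Mm by blast
    qed
  qed
  thus ?thesis using MA by blast
qed

lemma idem_J:
  fixes e :: "'a::ring_1"
  assumes ee: "e * e = e" and eJ: "e \<in> jacobson_radical"
  shows "e = 0"
proof (rule ccontr)
  assume ne: "e \<noteq> 0"
  let ?L = "{m + r * (1 - e) | m r. m \<in> {0::'a}}"
  have l0: "left_ideal {0::'a}" unfolding left_ideal_def by simp
  have LL: "left_ideal ?L" using span_ideal[OF l0] .
  have "1 \<notin> ?L"
  proof
    assume "1 \<in> ?L"
    then obtain m r where "m \<in> {0::'a}" "1 = m + r * (1 - e)" by blast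
    hence "1 = r * (1 - e)" by simp
    hence "e = r * (1 - e) * e" by simp
    also have "\<dots> = r * (e - e * e)" by (simp add: algebra_simps)
    also have "\<dots> = 0" using ee by simp
    finally show False using ne by simp
  qed
  then obtain M where MM: "maximal_left_ideal M" and LM: "?L \<subseteq> M" using max_exists[OF LL] by blast
  have ad: "\<And>x y. x \<in> M \<Longrightarrow> y \<in> M \<Longrightarrow> x + y \<in> M"
    and lm: "\<And>r x. x \<in> M \<Longrightarrow> r * x \<in> M" and pM: "M \<noteq> UNIV"
    using MM unfolding maximal_left_ideal_def left_ideal_def by auto
  have "0 + 1 * (1 - e) \<in> ?L" by blast
  hence "1 - e \<in> M" using LM by auto
  moreover have "e \<in> M" using eJ MM unfolding jacobson_radical_def by blast
  ultimately have "(1 - e) + e \<in> M" by (rule ad)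
  hence "1 \<in> M" by simp
  hence "r * 1 \<in> M" for r by (rule lm)
  hence "r \<in> M" for r by (metis mult.right_neutral)
  thus False using pM by blast
qed


lemma pw:
  fixes x y :: "'a::ring_1"
  assumes c: "y * x = x * y" and i: "y * x * y = y"
  shows "y ^ Suc n * x ^ Suc n = y * x"
proof (induction n)
  case 0 show ?case by simp
next
  case (Suc n)
  have "y ^ Suc (Suc n) * x ^ Suc (Suc n) = (y * y ^ Suc n) * (x ^ Suc n * x)"
    by (simp only: power_Suc[of y "Suc n"] power_Suc2[of x "Suc n"])
  also have "\<dots> = y * (y ^ Suc n * x ^ Suc n) * x" by (simp only: mult.assoc)
  also have "\<dots> = y * (y * x) * x" using Suc by simp
  also have "\<dots> = (y * x * y) * x" using c by (metis mult.assoc)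
  also have "\<dots> = y * x" using i by simp
  finally show ?case .
qed

lemma idem_calc:
  fixes p q :: "'a::ring_1"
  assumes pp: "p * p = p" and qq: "q * q = q" and pq: "p * q = q * p"
  shows "(q - q * p) * (q - q * p) = q - q * p"
proof -
  have 1: "(q - q * p) * (q - q * p) = q * q - q * q * p - q * p * q + q * p * q * p"
    by (simp add: algebra_simps)
  have 2: "q * p * q = q * p" using pq qq by (metis mult.assoc)
  have 3: "q * p * q * p = q * p" using 2 pp by (metis mult.assoc)
  have 5: "q * p * p = q * p" using pp by (simp add: mult.assoc)
  show ?thesis unfolding 1 3 qq 2 5 by simp
qed

lemma comm_basic:
  assumes h: "is_pdrazin_inv x y"
  shows "y * x = x * y" "y = y * x * y"
    "\<exists>k. x ^ k - x ^ (k + 1) * y \<in> jacobson_radical"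
    "\<And>c. x * c = c * x \<Longrightarrow> y * c = c * y"
  using h unfolding is_pdrazin_inv_def comm2_def comm_def by auto

lemma half:
  fixes x y1 y2 :: "'a::ring_1"
  assumes h1: "is_pdrazin_inv x y1" and h2: "is_pdrazin_inv x y2"
  shows "x * y2 = x * y1 * (x * y2)"
proof -
  note A = comm_basic[OF h1] and B = comm_basic[OF h2]
  have c1: "y1 * x = x * y1" by (rule A(1))
  have c2: "y2 * x = x * y2" by (rule B(1))
  have c12: "y1 * y2 = y2 * y1" using A(4)[of y2] c2 by simp
  obtain k1 where k1: "x ^ k1 - x ^ (k1 + 1) * y1 \<in> jacobson_radical" using A(3) by blast
  have xx: "x ^ Suc (Suc k1) * y1 = x ^ Suc k1 * (x * y1)"
    by (simp only: power_Suc2[of x "Suc k1"] mult.assoc)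
  have "x * (x ^ k1 - x ^ (k1 + 1) * y1) \<in> jacobson_radical" using J_left[OF k1] .
  hence "x ^ Suc k1 - x ^ Suc (Suc k1) * y1 \<in> jacobson_radical"
    by (simp add: right_diff_distrib mult.assoc)
  hence "y2 ^ Suc k1 * (x ^ Suc k1 - x ^ Suc (Suc k1) * y1) \<in> jacobson_radical" by (rule J_left)
  also have "y2 ^ Suc k1 * (x ^ Suc k1 - x ^ Suc (Suc k1) * y1)
      = y2 ^ Suc k1 * x ^ Suc k1 - y2 ^ Suc k1 * x ^ Suc k1 * (x * y1)"
    unfolding xx by (simp only: right_diff_distrib mult.assoc)
  also have "\<dots> = x * y2 - x * y2 * (x * y1)"
    using pw[OF B(1) B(2)[symmetric], of k1] c2 by simp
  finally have fJ: "x * y2 - x * y2 * (x * y1) \<in> jacobson_radical" .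
  have e1: "x * y1 * (x * y1) = x * y1"
    using A(2) c1 by (metis mult.assoc)
  have e2: "x * y2 * (x * y2) = x * y2"
    using B(2) c2 by (metis mult.assoc)
  have e12: "x * y1 * (x * y2) = x * y2 * (x * y1)"
  proof -
    have "x * y1 * (x * y2) = x * (y1 * x) * y2" by (simp add: mult.assoc)
    also have "\<dots> = x * x * (y1 * y2)" using c1 by (metis mult.assoc)
    also have "\<dots> = x * x * (y2 * y1)" using c12 by simp
    also have "\<dots> = x * (x * y2) * y1" by (simp add: mult.assoc)
    also have "\<dots> = x * y2 * (x * y1)" using c2 by (metis mult.assoc)
    finally show ?thesis .
  qed
  have "x * y2 - x * y2 * (x * y1) = 0"
    by (rule idem_J[OF idem_calc[OF e1 e2 e12] fJ])
  thus ?thesis using e12 by simp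
qed

lemma pd_unique:
  fixes x y1 y2 :: "'a::ring_1"
  assumes h1: "is_pdrazin_inv x y1" and h2: "is_pdrazin_inv x y2"
  shows "y1 = y2"
proof -
  note A = comm_basic[OF h1] and B = comm_basic[OF h2]
  have a: "x * y2 = x * y1 * (x * y2)" by (rule half[OF h1 h2])
  have b: "x * y1 = x * y2 * (x * y1)" by (rule half[OF h2 h1])
  have e12: "x * y1 * (x * y2) = x * y2 * (x * y1)"
  proof -
    have c12: "y1 * y2 = y2 * y1" using A(4)[of y2] B(1) by simp
    have "x * y1 * (x * y2) = x * (y1 * x) * y2" by (simp add: mult.assoc)
    also have "\<dots> = x * x * (y1 * y2)" using A(1) by (metis mult.assoc)
    also have "\<dots> = x * x * (y2 * y1)" using c12 by simp
    also have "\<dots> = x * (x * y2) * y1" by (simp add: mult.assoc)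
    also have "\<dots> = x * y2 * (x * y1)" using B(1) by (metis mult.assoc)
    finally show ?thesis .
  qed
  have e: "x * y1 = x * y2" using a b e12 by simp
  have "y1 = y1 * (x * y1)" using A(2) by (simp add: mult.assoc)
  also have "\<dots> = y1 * (x * y2)" using e by simp
  also have "\<dots> = (x * y1) * y2" using A(1) by (metis mult.assoc)
  also have "\<dots> = (y2 * x) * y2" using e B(1) by simp
  also have "\<dots> = y2" using B(2) by simp
  finally show ?thesis .
qed

lemma pdrazin_eq: "is_pdrazin_inv x y \<Longrightarrow> pdrazin x = y"
  unfolding pdrazin_def using pd_unique by blast

lemma ba_pow: "(b * a) ^ Suc n = b * (a * b) ^ n * (a::'a::ring_1)"
proof (induction n)
  case 0 show ?case by simp
next
  case (Suc n)
  have "(b * a) ^ Suc (Suc n) = (b * a) ^ Suc n * (b * a)" by (rule power_Suc2)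
  also have "\<dots> = b * ((a * b) ^ n * (a * b)) * a" using Suc by (simp add: mult.assoc)
  also have "\<dots> = b * (a * b) ^ Suc n * a" by (simp only: power_Suc2)
  finally show ?case .
qed

theorem corollary3p3:
  fixes a b :: "'a::ring_1"
  assumes "a * b \<in> pdrazin_set"
  shows "b * a \<in> pdrazin_set \<and> pdrazin (b * a) = b * (pdrazin (a * b))^2 * a"
proof -
  obtain y where hy: "is_pdrazin_inv (a * b) y" using assms unfolding pdrazin_set_def by blast
  note A = comm_basic[OF hy]
  define p where "p = a * b"
  have cp: "y * p = p * y" using A(1) unfolding p_def .
  have iy: "y * p * y = y" using A(2) unfolding p_def by simp
  have L: "p * (y * y) = y" using cp iy by (metis mult.assoc)
  have R: "y * y * p = y" using cp iy by (metis mult.assoc)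
  define z where "z = b * (y * y) * a"
  have "is_pdrazin_inv (b * a) z" unfolding is_pdrazin_inv_def
  proof (intro conjI)
    have "z * (b * a) * z = b * (y * y * p) * (p * (y * y)) * a"
      unfolding z_def p_def by (simp add: mult.assoc)
    also have "\<dots> = z" unfolding z_def using L R by (simp add: mult.assoc)
    finally show "z = z * (b * a) * z" by simp
  next
    show "z \<in> comm2 (b * a)" unfolding comm2_def comm_def
    proof (intro CollectI ballI)
      fix c assume "c \<in> {y. b * a * y = y * (b * a)}"
      hence cc: "b * a * c = c * (b * a)" by simp
      have pc: "p * (a * c * b) = (a * c * b) * p"
      proof -
        have "p * (a * c * b) = a * (b * a * c) * b" unfolding p_def by (simp add: mult.assoc)
        also have "\<dots> = a * (c * (b * a)) * b" using cc by simp
        also have "\<dots> = (a * c * b) * p" unfolding p_def by (simp add: mult.assoc)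
        finally show ?thesis .
      qed
      have yc: "y * (a * c * b) = (a * c * b) * y" using A(4)[of "a * c * b"] pc unfolding p_def by simp
      have yyy: "y * y * y * p = y * y" using R by (metis mult.assoc)
      have yyy2: "p * (y * y * y) = y * y" using L by (metis mult.assoc)
      have "z * c = b * (y * y * y * p) * a * c" unfolding z_def using yyy by simp
      also have "\<dots> = b * (y * y * y) * a * (b * a * c)" unfolding p_def by (simp add: mult.assoc)
      also have "\<dots> = b * (y * y * y) * a * (c * (b * a))" using cc by simp
      also have "\<dots> = b * (y * y * (y * (a * c * b))) * a" by (simp add: mult.assoc)
      also have "\<dots> = b * (y * y * ((a * c * b) * y)) * a" using yc by simp
      also have "\<dots> = b * (y * ((y * (a * c * b)) * y)) * a" by (simp add: mult.assoc)
      also have "\<dots> = b * (y * ((a * c * b) * y * y)) * a" using yc by (simp add: mult.assoc)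
      also have "\<dots> = b * ((y * (a * c * b)) * y * y) * a" by (simp add: mult.assoc)
      also have "\<dots> = b * ((a * c * b) * y * y * y) * a" using yc by (simp add: mult.assoc)
      also have "\<dots> = (b * a * c) * b * (y * y * y) * a" by (simp add: mult.assoc)
      also have "\<dots> = (c * (b * a)) * b * (y * y * y) * a" using cc by simp
      also have "\<dots> = c * b * (p * (y * y * y)) * a" unfolding p_def by (simp add: mult.assoc)
      also have "\<dots> = c * z" unfolding z_def using yyy2 by (simp add: mult.assoc)
      finally show "z * c = c * z" .
    qed
  next
    obtain k where k: "p ^ k - p ^ (k + 1) * y \<in> jacobson_radical" using A(3) unfolding p_def by blast
    have "b * (p ^ k - p ^ (k + 1) * y) * a \<in> jacobson_radical"
      using J_right[OF J_left[OF k]] .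
    also have "b * (p ^ k - p ^ (k + 1) * y) * a = (b * a) ^ (k + 1) - (b * a) ^ (k + 1 + 1) * z"
    proof -
      have "(b * a) ^ (k + 1 + 1) * z = b * (p ^ (k + 1) * (p * (y * y))) * a"
        unfolding z_def using ba_pow[of b a "k + 1"] unfolding p_def by (simp add: mult.assoc)
      also have "\<dots> = b * (p ^ (k + 1) * y) * a" using L by simp
      finally have "(b * a) ^ (k + 1 + 1) * z = b * (p ^ (k + 1) * y) * a" .
      moreover have "(b * a) ^ (k + 1) = b * p ^ k * a" using ba_pow[of b a k] unfolding p_def by simp
      ultimately show ?thesis by (simp add: left_diff_distrib right_diff_distrib)
    qed
    finally show "\<exists>k. (b * a) ^ k - (b * a) ^ (k + 1) * z \<in> jacobson_radical" by blast
  qed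
  hence "b * a \<in> pdrazin_set" unfolding pdrazin_set_def by blast
  moreover have "pdrazin (b * a) = z" using pdrazin_eq[OF \<open>is_pdrazin_inv (b * a) z\<close>] .
  moreover have "pdrazin (a * b) = y" using pdrazin_eq[OF hy] .
  ultimately show ?thesis unfolding z_def by (simp add: power2_eq_square)
qed

end
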